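(* Let $G$ be a two-player stage game with $|V_1^{p,p}|=1$ and $|V_2^{p,p}|>1$. If $G\notin\mathcal{G}_{LS}^{p,p}$, then $G\notin\mathcal{G}_{LS}^{m,p}$.
   Context: A two-player stage game $G$ has finite nonempty action sets $A_1,A_2$ and payoffs $u_1,u_2:A_1\times A_2\to\mathbb{R}$, extended to mixed strategies by expectation. $G(T)$ is the $T$-round repetition with realized actions observed each round and payoffs the expected sum of stage payoffs; an SPE of $G(T)$ is a strategy profile whose continuation after every history of length $k<T$ is a Nash equilibrium of $G(T-k)$. Regimes: pure-pure ($p,p$): both players restricted to actions (in the stage game and in every round, including deviations); mixed-pure ($m,p$): player 1 may mix, player 2 uses only actions; mixed-mixed ($m,m$): both may mix. For regime $r$, $\mathrm{Nash}^r(G)$ is the set of stage-game profiles available in $r$ from which no player can profitably deviate unilaterally to a strategy available in $r$, and $V_i^r=\{u_i(\sigma):\sigma\in\mathrm{Nash}^r(G)\}$. Locally suboptimal behavior occurs in an SPE $\mu$ of $G(T)$ (regime $r$) if for some history $h$ of length $k<T$, $(\mu_1(h),\mu_2(h))\notin\mathrm{Nash}^r(G)$. $\mathcal{G}_{LS}^r$ is the set of stage games $G$ for which there exist $T\ge1$ and an SPE of $G(T)$ in regime $r$ in which locally suboptimal behavior occurs. *)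

theory Defs
  imports Complex_Main
begin

datatype regime = PP | MP | MM

definition mixed :: "'x set \<Rightarrow> ('x \<Rightarrow> real) \<Rightarrow> bool" where
  "mixed A \<sigma> \<longleftrightarrow> (\<forall>x. 0 \<le> \<sigma> x) \<and> (\<forall>x. x \<notin> A \<longrightarrow> \<sigma> x = 0) \<and> sum \<sigma> A = 1"

definition pure_strat :: "'x set \<Rightarrow> ('x \<Rightarrow> real) \<Rightarrow> bool" where
  "pure_strat A \<sigma> \<longleftrightarrow> (\<exists>a\<in>A. \<sigma> = (\<lambda>x. if x = a then 1 else 0))"

definition avail1 :: "regime \<Rightarrow> 'a set \<Rightarrow> ('a \<Rightarrow> real) \<Rightarrow> bool" where
  "avail1 r A \<sigma> = (if r = PP then pure_strat A \<sigma> else mixed A \<sigma>)"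

definition avail2 :: "regime \<Rightarrow> 'b set \<Rightarrow> ('b \<Rightarrow> real) \<Rightarrow> bool" where
  "avail2 r B \<tau> = (if r = MM then mixed B \<tau> else pure_strat B \<tau>)"

definition EU :: "'a set \<Rightarrow> 'b set \<Rightarrow> ('a \<Rightarrow> 'b \<Rightarrow> real) \<Rightarrow> ('a \<Rightarrow> real) \<Rightarrow> ('b \<Rightarrow> real) \<Rightarrow> real" where
  "EU A B u \<sigma> \<tau> = (\<Sum>a\<in>A. \<Sum>b\<in>B. \<sigma> a * \<tau> b * u a b)"

definition stage_nash :: "regime \<Rightarrow> 'a set \<Rightarrow> 'b set \<Rightarrow> ('a \<Rightarrow> 'b \<Rightarrow> real) \<Rightarrow> ('a \<Rightarrow> 'b \<Rightarrow> real)
    \<Rightarrow> ('a \<Rightarrow> real) \<Rightarrow> ('b \<Rightarrow> real) \<Rightarrow> bool" where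
  "stage_nash r A B u1 u2 \<sigma> \<tau> \<longleftrightarrow> avail1 r A \<sigma> \<and> avail2 r B \<tau> \<and>
     (\<forall>\<sigma>'. avail1 r A \<sigma>' \<longrightarrow> EU A B u1 \<sigma>' \<tau> \<le> EU A B u1 \<sigma> \<tau>) \<and>
     (\<forall>\<tau>'. avail2 r B \<tau>' \<longrightarrow> EU A B u2 \<sigma> \<tau>' \<le> EU A B u2 \<sigma> \<tau>)"

definition V1 :: "regime \<Rightarrow> 'a set \<Rightarrow> 'b set \<Rightarrow> ('a \<Rightarrow> 'b \<Rightarrow> real) \<Rightarrow> ('a \<Rightarrow> 'b \<Rightarrow> real) \<Rightarrow> real set" where
  "V1 r A B u1 u2 = {EU A B u1 \<sigma> \<tau> | \<sigma> \<tau>. stage_nash r A B u1 u2 \<sigma> \<tau>}"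

definition V2 :: "regime \<Rightarrow> 'a set \<Rightarrow> 'b set \<Rightarrow> ('a \<Rightarrow> 'b \<Rightarrow> real) \<Rightarrow> ('a \<Rightarrow> 'b \<Rightarrow> real) \<Rightarrow> real set" where
  "V2 r A B u1 u2 = {EU A B u2 \<sigma> \<tau> | \<sigma> \<tau>. stage_nash r A B u1 u2 \<sigma> \<tau>}"

text \<open>Repeated game: histories are lists of realized action profiles; (behavioural)
  strategies map histories to stage strategies.\<close>
type_synonym ('a,'b) hist = "('a \<times> 'b) list"

definition is_hist :: "'a set \<Rightarrow> 'b set \<Rightarrow> ('a,'b) hist \<Rightarrow> bool" where
  "is_hist A B h \<longleftrightarrow> set h \<subseteq> A \<times> B"

primrec rval :: "'a set \<Rightarrow> 'b set \<Rightarrow> ('a \<Rightarrow> 'b \<Rightarrow> real) \<Rightarrow> (('a,'b) hist \<Rightarrow> 'a \<Rightarrow> real)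
    \<Rightarrow> (('a,'b) hist \<Rightarrow> 'b \<Rightarrow> real) \<Rightarrow> nat \<Rightarrow> ('a,'b) hist \<Rightarrow> real" where
  "rval A B u s1 s2 0 h = 0"
| "rval A B u s1 s2 (Suc n) h =
     (\<Sum>a\<in>A. \<Sum>b\<in>B. s1 h a * s2 h b * (u a b + rval A B u s1 s2 n (h @ [(a, b)])))"

definition strat1 :: "regime \<Rightarrow> 'a set \<Rightarrow> 'b set \<Rightarrow> nat \<Rightarrow> (('a,'b) hist \<Rightarrow> 'a \<Rightarrow> real) \<Rightarrow> bool" where
  "strat1 r A B n s \<longleftrightarrow> (\<forall>h. is_hist A B h \<and> length h < n \<longrightarrow> avail1 r A (s h))"

definition strat2 :: "regime \<Rightarrow> 'a set \<Rightarrow> 'b set \<Rightarrow> nat \<Rightarrow> (('a,'b) hist \<Rightarrow> 'b \<Rightarrow> real) \<Rightarrow> bool" where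
  "strat2 r A B n s \<longleftrightarrow> (\<forall>h. is_hist A B h \<and> length h < n \<longrightarrow> avail2 r B (s h))"

definition rep_nash :: "regime \<Rightarrow> 'a set \<Rightarrow> 'b set \<Rightarrow> ('a \<Rightarrow> 'b \<Rightarrow> real) \<Rightarrow> ('a \<Rightarrow> 'b \<Rightarrow> real) \<Rightarrow> nat
    \<Rightarrow> (('a,'b) hist \<Rightarrow> 'a \<Rightarrow> real) \<Rightarrow> (('a,'b) hist \<Rightarrow> 'b \<Rightarrow> real) \<Rightarrow> bool" where
  "rep_nash r A B u1 u2 n s1 s2 \<longleftrightarrow> strat1 r A B n s1 \<and> strat2 r A B n s2 \<and>
     (\<forall>s1'. strat1 r A B n s1' \<longrightarrow> rval A B u1 s1' s2 n [] \<le> rval A B u1 s1 s2 n []) \<and>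
     (\<forall>s2'. strat2 r A B n s2' \<longrightarrow> rval A B u2 s1 s2' n [] \<le> rval A B u2 s1 s2 n [])"

definition cont :: "(('a,'b) hist \<Rightarrow> 'c) \<Rightarrow> ('a,'b) hist \<Rightarrow> (('a,'b) hist \<Rightarrow> 'c)" where
  "cont s h = (\<lambda>h'. s (h @ h'))"

definition SPE :: "regime \<Rightarrow> 'a set \<Rightarrow> 'b set \<Rightarrow> ('a \<Rightarrow> 'b \<Rightarrow> real) \<Rightarrow> ('a \<Rightarrow> 'b \<Rightarrow> real) \<Rightarrow> nat
    \<Rightarrow> (('a,'b) hist \<Rightarrow> 'a \<Rightarrow> real) \<Rightarrow> (('a,'b) hist \<Rightarrow> 'b \<Rightarrow> real) \<Rightarrow> bool" where
  "SPE r A B u1 u2 T s1 s2 \<longleftrightarrow> (\<forall>h. is_hist A B h \<and> length h < T \<longrightarrow>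
      rep_nash r A B u1 u2 (T - length h) (cont s1 h) (cont s2 h))"

definition in_GLS :: "regime \<Rightarrow> 'a set \<Rightarrow> 'b set \<Rightarrow> ('a \<Rightarrow> 'b \<Rightarrow> real) \<Rightarrow> ('a \<Rightarrow> 'b \<Rightarrow> real) \<Rightarrow> bool" where
  "in_GLS r A B u1 u2 \<longleftrightarrow> (\<exists>T\<ge>1. \<exists>s1 s2. SPE r A B u1 u2 T s1 s2 \<and>
      (\<exists>h. is_hist A B h \<and> length h < T \<and> \<not> stage_nash r A B u1 u2 (s1 h) (s2 h)))"

end

theory Submission
  imports Defs
begin

definition dl :: "'x \<Rightarrow> 'x \<Rightarrow> real" where
  "dl a = (\<lambda>x. if x = a then 1 else 0)"

lemma pure_strat_dl: "pure_strat A \<sigma> \<longleftrightarrow> (\<exists>a\<in>A. \<sigma> = dl a)"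
  by (simp add: pure_strat_def dl_def)

lemma dl_inj: "dl a = dl b \<Longrightarrow> a = b"
  by (metis dl_def zero_neq_one)

lemma sum_dl1: "finite A \<Longrightarrow> a \<in> A \<Longrightarrow> (\<Sum>x\<in>A. dl a x * f x) = f a"
proof -
  assume "finite A" "a \<in> A"
  have "(\<Sum>x\<in>A. dl a x * f x) = (\<Sum>x\<in>A. if x = a then f x else 0)"
    by (rule sum.cong) (auto simp: dl_def)
  also have "\<dots> = f a" using sum.delta[of A a f] \<open>finite A\<close> \<open>a \<in> A\<close> by simp
  finally show ?thesis .
qed

lemma sum_dl2: "finite B \<Longrightarrow> b \<in> B \<Longrightarrow> (\<Sum>y\<in>B. c * dl b y * f y) = c * f b"
proof -
  assume "finite B" "b \<in> B"
  have "(\<Sum>y\<in>B. c * dl b y * f y) = c * (\<Sum>y\<in>B. dl b y * f y)"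
    by (simp add: sum_distrib_left mult.assoc)
  then show ?thesis using sum_dl1[OF \<open>finite B\<close> \<open>b \<in> B\<close>] by simp
qed

lemma mixed_dl: "finite A \<Longrightarrow> a \<in> A \<Longrightarrow> mixed A (dl a)"
  using sum_dl1[of A a "\<lambda>_. 1"] by (auto simp: mixed_def dl_def)

lemma EU_dl2: "finite B \<Longrightarrow> b \<in> B \<Longrightarrow> EU A B u \<sigma> (dl b) = (\<Sum>x\<in>A. \<sigma> x * u x b)"
  unfolding EU_def by (simp add: sum_dl2)

lemma EU_dl: "finite A \<Longrightarrow> finite B \<Longrightarrow> a \<in> A \<Longrightarrow> b \<in> B \<Longrightarrow> EU A B u (dl a) (dl b) = u a b"
  by (simp add: EU_dl2 sum_dl1)

lemma stage_nash_PP_dl: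
  assumes "finite A" "finite B"
  shows "stage_nash PP A B u1 u2 (dl a) (dl b) \<longleftrightarrow> a \<in> A \<and> b \<in> B \<and>
     (\<forall>a'\<in>A. u1 a' b \<le> u1 a b) \<and> (\<forall>b'\<in>B. u2 a b' \<le> u2 a b)"
proof
  assume H: "stage_nash PP A B u1 u2 (dl a) (dl b)"
  then have ab: "a \<in> A" "b \<in> B"
    by (auto simp: stage_nash_def avail1_def avail2_def pure_strat_dl dest: dl_inj)
  show "a \<in> A \<and> b \<in> B \<and> (\<forall>a'\<in>A. u1 a' b \<le> u1 a b) \<and> (\<forall>b'\<in>B. u2 a b' \<le> u2 a b)"
  proof (intro conjI ballI ab)
    fix a' assume "a' \<in> A"
    then have "EU A B u1 (dl a') (dl b) \<le> EU A B u1 (dl a) (dl b)"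
      using H by (auto simp: stage_nash_def avail1_def pure_strat_dl)
    then show "u1 a' b \<le> u1 a b" using assms ab \<open>a' \<in> A\<close> by (simp add: EU_dl)
  next
    fix b' assume "b' \<in> B"
    then have "EU A B u2 (dl a) (dl b') \<le> EU A B u2 (dl a) (dl b)"
      using H by (auto simp: stage_nash_def avail2_def pure_strat_dl)
    then show "u2 a b' \<le> u2 a b" using assms ab \<open>b' \<in> B\<close> by (simp add: EU_dl)
  qed
next
  assume "a \<in> A \<and> b \<in> B \<and> (\<forall>a'\<in>A. u1 a' b \<le> u1 a b) \<and> (\<forall>b'\<in>B. u2 a b' \<le> u2 a b)"
  then show "stage_nash PP A B u1 u2 (dl a) (dl b)"
    using assms by (auto simp: stage_nash_def avail1_def avail2_def pure_strat_dl EU_dl)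
qed

lemma is_hist_Cons[simp]: "is_hist A B ((a,b)#h) \<longleftrightarrow> a \<in> A \<and> b \<in> B \<and> is_hist A B h"
  by (auto simp: is_hist_def)

lemma is_hist_Nil[simp]: "is_hist A B []"
  by (auto simp: is_hist_def)

lemma is_hist_append[simp]: "is_hist A B (h @ h') \<longleftrightarrow> is_hist A B h \<and> is_hist A B h'"
  by (auto simp: is_hist_def)

lemma rval_mstep:
  assumes "finite B" "b \<in> B" "s2 h = dl b"
  shows "rval A B u s1 s2 (Suc m) h = (\<Sum>x\<in>A. s1 h x * (u x b + rval A B u s1 s2 m (h @ [(x, b)])))"
  using assms by (simp add: sum_dl2)

lemma rval_pstep:
  assumes "finite A" "a \<in> A" "finite B" "b \<in> B" "s1 h = dl a" "s2 h = dl b"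
  shows "rval A B u s1 s2 (Suc m) h = u a b + rval A B u s1 s2 m (h @ [(a, b)])"
proof -
  have "rval A B u s1 s2 (Suc m) h = (\<Sum>x\<in>A. s1 h x * (u x b + rval A B u s1 s2 m (h @ [(x, b)])))"
    using assms(3,4,6) by (rule rval_mstep)
  also have "\<dots> = u a b + rval A B u s1 s2 m (h @ [(a, b)])"
    by (simp add: assms(5) sum_dl1[OF assms(1,2)])
  finally show ?thesis .
qed

lemma rval_cong:
  "(\<forall>h'. s1 (h@h') = t1 (h@h')) \<Longrightarrow> (\<forall>h'. s2 (h@h') = t2 (h@h')) \<Longrightarrow>
   rval A B u s1 s2 m h = rval A B u t1 t2 m h"
proof (induction m arbitrary: h)
  case 0
  then show ?case by simp
next
  case (Suc m)
  have IH: "rval A B u s1 s2 m (h @ [(a, b)]) = rval A B u t1 t2 m (h @ [(a, b)])" for a b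
    using Suc.IH[of "h @ [(a,b)]"] Suc.prems by simp
  have "s1 h = t1 h" "s2 h = t2 h" using Suc.prems[THEN spec, of "[]"] by auto
  then show ?case using IH by simp
qed

lemma rval_cont: "rval A B u (cont s1 h) (cont s2 h) m h' = rval A B u s1 s2 m (h @ h')"
  by (induction m arbitrary: h') (simp_all add: cont_def)

lemma cont_Nil[simp]: "cont s [] = s"
  by (simp add: cont_def)

lemma rval_const:
  assumes "finite A" "finite B" "a \<in> A" "b \<in> B"
  shows "(\<forall>h'. s1 (h@h') = dl a) \<Longrightarrow> (\<forall>h'. s2 (h@h') = dl b) \<Longrightarrow>
     rval A B u s1 s2 m h = real m * u a b"
proof (induction m arbitrary: h)
  case 0
  then show ?case by simp
next
  case (Suc m)
  have IH: "rval A B u s1 s2 m (h @ [(a, b)]) = real m * u a b"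
    using Suc.IH[of "h @ [(a,b)]"] Suc.prems by simp
  have "s1 h = dl a" "s2 h = dl b" using Suc.prems[THEN spec, of "[]"] by auto
  then have "rval A B u s1 s2 (Suc m) h = u a b + rval A B u s1 s2 m (h @ [(a, b)])"
    using assms by (intro rval_pstep) auto
  then show ?case using IH by (simp add: algebra_simps)
qed

lemma rval_bound1:
  assumes "finite A" "finite B" "b \<in> B" "\<forall>a\<in>A. u a b \<le> c"
  shows "(\<forall>h'. s2 (h@h') = dl b) \<Longrightarrow>
     (\<forall>h'. is_hist A B h' \<and> length h' < m \<longrightarrow> pure_strat A (s1 (h@h'))) \<Longrightarrow>
     rval A B u s1 s2 m h \<le> real m * c"
proof (induction m arbitrary: h)
  case 0
  then show ?case by simp
next
  case (Suc m)
  obtain a where a: "a \<in> A" "s1 h = dl a" using Suc.prems(2)[THEN spec, of "[]"]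
    by (auto simp: pure_strat_dl)
  have IH: "rval A B u s1 s2 m (h @ [(a, b)]) \<le> real m * c"
  proof (rule Suc.IH)
    show "\<forall>h'. s2 ((h @ [(a, b)]) @ h') = dl b" using Suc.prems(1) by simp
    show "\<forall>h'. is_hist A B h' \<and> length h' < m \<longrightarrow> pure_strat A (s1 ((h @ [(a, b)]) @ h'))"
    proof (intro allI impI)
      fix h' assume "is_hist A B h' \<and> length h' < m"
      then show "pure_strat A (s1 ((h @ [(a, b)]) @ h'))"
        using Suc.prems(2)[THEN spec, of "(a,b) # h'"] a assms by simp
    qed
  qed
  have "s2 h = dl b" using Suc.prems(1)[THEN spec, of "[]"] by auto
  then have "rval A B u s1 s2 (Suc m) h = u a b + rval A B u s1 s2 m (h @ [(a, b)])"
    using a assms by (intro rval_pstep) auto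
  also have "\<dots> \<le> c + real m * c" using IH assms a by (intro add_mono) auto
  finally show ?case by (simp add: algebra_simps)
qed

lemma rval_bound2:
  assumes "finite A" "finite B" "a \<in> A" "\<forall>b\<in>B. u a b \<le> c"
  shows "(\<forall>h'. s1 (h@h') = dl a) \<Longrightarrow>
     (\<forall>h'. is_hist A B h' \<and> length h' < m \<longrightarrow> pure_strat B (s2 (h@h'))) \<Longrightarrow>
     rval A B u s1 s2 m h \<le> real m * c"
proof (induction m arbitrary: h)
  case 0
  then show ?case by simp
next
  case (Suc m)
  obtain b where b: "b \<in> B" "s2 h = dl b" using Suc.prems(2)[THEN spec, of "[]"]
    by (auto simp: pure_strat_dl)
  have IH: "rval A B u s1 s2 m (h @ [(a, b)]) \<le> real m * c"
  proof (rule Suc.IH)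
    show "\<forall>h'. s1 ((h @ [(a, b)]) @ h') = dl a" using Suc.prems(1) by simp
    show "\<forall>h'. is_hist A B h' \<and> length h' < m \<longrightarrow> pure_strat B (s2 ((h @ [(a, b)]) @ h'))"
    proof (intro allI impI)
      fix h' assume "is_hist A B h' \<and> length h' < m"
      then show "pure_strat B (s2 ((h @ [(a, b)]) @ h'))"
        using Suc.prems(2)[THEN spec, of "(a,b) # h'"] b assms by simp
    qed
  qed
  have "s1 h = dl a" using Suc.prems(1)[THEN spec, of "[]"] by auto
  then have "rval A B u s1 s2 (Suc m) h = u a b + rval A B u s1 s2 m (h @ [(a, b)])"
    using b assms by (intro rval_pstep) auto
  also have "\<dots> \<le> c + real m * c" using IH assms b by (intro add_mono) auto
  finally show ?case by (simp add: algebra_simps)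
qed

lemma const_rep_nash:
  assumes fin: "finite A" "finite B" and ab: "a \<in> A" "b \<in> B"
    and br1: "\<forall>a'\<in>A. u1 a' b \<le> u1 a b" and br2: "\<forall>b'\<in>B. u2 a b' \<le> u2 a b"
  shows "rep_nash PP A B u1 u2 m (\<lambda>_. dl a) (\<lambda>_. dl b)"
  unfolding rep_nash_def
proof (intro conjI allI impI)
  show "strat1 PP A B m (\<lambda>_. dl a)" using ab by (auto simp: strat1_def avail1_def pure_strat_dl)
  show "strat2 PP A B m (\<lambda>_. dl b)" using ab by (auto simp: strat2_def avail2_def pure_strat_dl)
  have E1: "rval A B u1 (\<lambda>_. dl a) (\<lambda>_. dl b) m [] = real m * u1 a b"
    using rval_const[OF fin ab] by simp
  have E2: "rval A B u2 (\<lambda>_. dl a) (\<lambda>_. dl b) m [] = real m * u2 a b"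
    using rval_const[OF fin ab] by simp
  fix s1' assume "strat1 PP A B m s1'"
  then show "rval A B u1 s1' (\<lambda>_. dl b) m [] \<le> rval A B u1 (\<lambda>_. dl a) (\<lambda>_. dl b) m []"
    unfolding E1 using rval_bound1[where A=A and B=B and b=b and u=u1 and c="u1 a b" and ?s2.0="\<lambda>_. dl b" and h="[]" and m=m and ?s1.0=s1'] fin ab br1
    by (auto simp: strat1_def avail1_def)
next
  have E2: "rval A B u2 (\<lambda>_. dl a) (\<lambda>_. dl b) m [] = real m * u2 a b"
    using rval_const[OF fin ab] by simp
  fix s2' assume "strat2 PP A B m s2'"
  then show "rval A B u2 (\<lambda>_. dl a) s2' m [] \<le> rval A B u2 (\<lambda>_. dl a) (\<lambda>_. dl b) m []"
    unfolding E2 using rval_bound2[where A=A and B=B and a=a and u=u2 and c="u2 a b" and ?s1.0="\<lambda>_. dl a" and h="[]" and m=m and ?s2.0=s2'] fin ab br2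
    by (auto simp: strat2_def avail2_def)
qed


lemma pp_cond:
  fixes A1 :: "'a set" and A2 :: "'b set" and u1 u2 :: "'a \<Rightarrow> 'b \<Rightarrow> real"
  assumes fin: "finite A1" "finite A2"
    and NH: "stage_nash PP A1 A2 u1 u2 (dl aH) (dl bH)"
    and NL: "stage_nash PP A1 A2 u1 u2 (dl aL) (dl bL)"
    and HL: "u2 aL bL < u2 aH bH"
    and a0: "a0 \<in> A1" "b0 \<in> A2" "\<forall>a\<in>A1. u1 a b0 \<le> u1 a0 b0"
    and b1: "b1 \<in> A2" "u2 a0 b0 < u2 a0 b1"
  shows "in_GLS PP A1 A2 u1 u2"
proof -
  from NH have H: "aH \<in> A1" "bH \<in> A2" "\<forall>a'\<in>A1. u1 a' bH \<le> u1 aH bH" "\<forall>b'\<in>A2. u2 aH b' \<le> u2 aH bH"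
    using stage_nash_PP_dl[OF fin] by blast+
  from NL have L: "aL \<in> A1" "bL \<in> A2" "\<forall>a'\<in>A1. u1 a' bL \<le> u1 aL bL" "\<forall>b'\<in>A2. u2 aL b' \<le> u2 aL bL"
    using stage_nash_PP_dl[OF fin] by blast+
  define M where "M = Max (u2 a0 ` A2)"
  have M: "u2 a0 b' \<le> M" if "b' \<in> A2" for b'
    unfolding M_def using fin that by (intro Max_ge) auto
  obtain k :: nat where k: "M - u2 a0 b0 < real k * (u2 aH bH - u2 aL bL)"
    using reals_Archimedean3[of "u2 aH bH - u2 aL bL"] HL by auto
  define s1 :: "('a,'b) hist \<Rightarrow> 'a \<Rightarrow> real" where
    "s1 = (\<lambda>h. if h = [] then dl a0 else if snd (hd h) = b0 then dl aH else dl aL)"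
  define s2 :: "('a,'b) hist \<Rightarrow> 'b \<Rightarrow> real" where
    "s2 = (\<lambda>h. if h = [] then dl b0 else if snd (hd h) = b0 then dl bH else dl bL)"
  define T where "T = Suc k"
  have root: "rep_nash PP A1 A2 u1 u2 T s1 s2"
    unfolding rep_nash_def
  proof (intro conjI allI impI)
    show "strat1 PP A1 A2 T s1" using a0 H L by (auto simp: strat1_def avail1_def pure_strat_dl s1_def)
    show "strat2 PP A1 A2 T s2" using a0 H L by (auto simp: strat2_def avail2_def pure_strat_dl s2_def)
  next
    have E1: "rval A1 A2 u1 s1 s2 T [] = u1 a0 b0 + real k * u1 aH bH"
    proof -
      have "rval A1 A2 u1 s1 s2 T [] = u1 a0 b0 + rval A1 A2 u1 s1 s2 k ([] @ [(a0, b0)])"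
        unfolding T_def using fin a0 by (intro rval_pstep) (auto simp: s1_def s2_def)
      also have "rval A1 A2 u1 s1 s2 k ([] @ [(a0, b0)]) = real k * u1 aH bH"
        using fin H by (intro rval_const) (auto simp: s1_def s2_def)
      finally show ?thesis .
    qed
    fix s1' assume st: "strat1 PP A1 A2 T s1'"
    then obtain a' where a': "a' \<in> A1" "s1' [] = dl a'"
      unfolding strat1_def avail1_def T_def by (auto simp: pure_strat_dl dest: spec[of _ "[]"])
    have eq1: "rval A1 A2 u1 s1' s2 T [] = u1 a' b0 + rval A1 A2 u1 s1' s2 k ([] @ [(a', b0)])"
      unfolding T_def using fin a0 a' by (intro rval_pstep) (auto simp: s2_def)
    have bd1: "rval A1 A2 u1 s1' s2 k ([] @ [(a', b0)]) \<le> real k * u1 aH bH"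
    proof (rule rval_bound1[where u=u1 and b=bH and c="u1 aH bH"])
      show "\<forall>h'. s2 (([] @ [(a', b0)]) @ h') = dl bH" by (simp add: s2_def)
      show "\<forall>h'. is_hist A1 A2 h' \<and> length h' < k \<longrightarrow> pure_strat A1 (s1' (([] @ [(a', b0)]) @ h'))"
        using st a' a0 unfolding strat1_def avail1_def T_def
        by (auto dest: spec[of _ "(a',b0) # h'" for h'])
    qed (use fin H in auto)
    show "rval A1 A2 u1 s1' s2 T [] \<le> rval A1 A2 u1 s1 s2 T []"
      unfolding E1 eq1 using a0(3) a' bd1 by force
  next
    have E2: "rval A1 A2 u2 s1 s2 T [] = u2 a0 b0 + real k * u2 aH bH"
    proof -
      have "rval A1 A2 u2 s1 s2 T [] = u2 a0 b0 + rval A1 A2 u2 s1 s2 k ([] @ [(a0, b0)])"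
        unfolding T_def using fin a0 by (intro rval_pstep) (auto simp: s1_def s2_def)
      also have "rval A1 A2 u2 s1 s2 k ([] @ [(a0, b0)]) = real k * u2 aH bH"
        using fin H by (intro rval_const) (auto simp: s1_def s2_def)
      finally show ?thesis .
    qed
    fix s2' assume st: "strat2 PP A1 A2 T s2'"
    then obtain b' where b': "b' \<in> A2" "s2' [] = dl b'"
      unfolding strat2_def avail2_def T_def by (auto simp: pure_strat_dl dest: spec[of _ "[]"])
    have pur: "\<forall>h'. is_hist A1 A2 h' \<and> length h' < k \<longrightarrow> pure_strat A2 (s2' (([] @ [(a0, b')]) @ h'))"
      using st b' a0 unfolding strat2_def avail2_def T_def
      by (auto dest: spec[of _ "(a0,b') # h'" for h'])
    have eq: "rval A1 A2 u2 s1 s2' T [] = u2 a0 b' + rval A1 A2 u2 s1 s2' k ([] @ [(a0, b')])"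
      unfolding T_def using fin a0 b' by (intro rval_pstep) (auto simp: s1_def)
    show "rval A1 A2 u2 s1 s2' T [] \<le> rval A1 A2 u2 s1 s2 T []"
    proof (cases "b' = b0")
      case True
      have "rval A1 A2 u2 s1 s2' k ([] @ [(a0, b')]) \<le> real k * u2 aH bH"
      proof (rule rval_bound2[where u=u2 and a=aH and c="u2 aH bH"])
        show "\<forall>h'. s1 (([] @ [(a0, b')]) @ h') = dl aH" using True by (simp add: s1_def)
      qed (use fin H pur in auto)
      then show ?thesis unfolding eq E2 using True by simp
    next
      case False
      have "rval A1 A2 u2 s1 s2' k ([] @ [(a0, b')]) \<le> real k * u2 aL bL"
      proof (rule rval_bound2[where u=u2 and a=aL and c="u2 aL bL"])
        show "\<forall>h'. s1 (([] @ [(a0, b')]) @ h') = dl aL" using False by (simp add: s1_def)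
      qed (use fin L pur in auto)
      moreover have "u2 a0 b' \<le> M" using M b' by auto
      ultimately show ?thesis unfolding eq E2 using k
        by (simp add: algebra_simps)
    qed
  qed
  have SPE: "SPE PP A1 A2 u1 u2 T s1 s2"
    unfolding SPE_def
  proof (intro allI impI)
    fix h :: "('a,'b) hist" assume hh: "is_hist A1 A2 h \<and> length h < T"
    show "rep_nash PP A1 A2 u1 u2 (T - length h) (cont s1 h) (cont s2 h)"
    proof (cases "h = []")
      case True
      then show ?thesis using root by simp
    next
      case False
      show ?thesis
      proof (cases "snd (hd h) = b0")
        case True
        have "cont s1 h = (\<lambda>_. dl aH)" "cont s2 h = (\<lambda>_. dl bH)"
          using False True by (auto simp: cont_def s1_def s2_def hd_append2)
        then show ?thesis using const_rep_nash[where ?u1.0=u1 and ?u2.0=u2, OF fin H] by simp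
      next
        case F2: False
        have "cont s1 h = (\<lambda>_. dl aL)" "cont s2 h = (\<lambda>_. dl bL)"
          using False F2 by (auto simp: cont_def s1_def s2_def hd_append2)
        then show ?thesis using const_rep_nash[where ?u1.0=u1 and ?u2.0=u2, OF fin L] by simp
      qed
    qed
  qed
  have LS: "\<not> stage_nash PP A1 A2 u1 u2 (s1 []) (s2 [])"
    using stage_nash_PP_dl[OF fin] b1 by (force simp: s1_def s2_def)
  show ?thesis unfolding in_GLS_def
  proof (intro exI conjI)
    show "1 \<le> T" by (simp add: T_def)
    show "SPE PP A1 A2 u1 u2 T s1 s2" by (rule SPE)
    show "is_hist A1 A2 []" by simp
    show "length [] < T" by (simp add: T_def)
    show "\<not> stage_nash PP A1 A2 u1 u2 (s1 []) (s2 [])" by (rule LS)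
  qed
qed


lemma mp_part:
  fixes A1 :: "'a set" and A2 :: "'b set" and u1 u2 :: "'a \<Rightarrow> 'b \<Rightarrow> real"
  assumes fin: "finite A1" "finite A2"
    and cond: "\<And>a b b'. a \<in> A1 \<Longrightarrow> b \<in> A2 \<Longrightarrow> \<forall>a'\<in>A1. u1 a' b \<le> u1 a b \<Longrightarrow> b' \<in> A2 \<Longrightarrow> u2 a b' \<le> u2 a b"
    and v1: "\<And>a b. a \<in> A1 \<Longrightarrow> b \<in> A2 \<Longrightarrow> \<forall>a'\<in>A1. u1 a' b \<le> u1 a b \<Longrightarrow> u1 a b = v"
    and spe: "SPE MP A1 A2 u1 u2 T s1 s2"
  shows "\<forall>h. is_hist A1 A2 h \<and> length h + m = T \<longrightarrow>
     rval A1 A2 u1 s1 s2 m h = real m * v \<and> (0 < m \<longrightarrow> stage_nash MP A1 A2 u1 u2 (s1 h) (s2 h))"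
proof (induction m)
  case 0
  then show ?case by simp
next
  case (Suc k)
  show ?case
  proof (intro allI impI)
    fix h assume hh: "is_hist A1 A2 h \<and> length h + Suc k = T"
    then have RN: "rep_nash MP A1 A2 u1 u2 (Suc k) (cont s1 h) (cont s2 h)"
    proof -
      have "length h < T" "T - length h = Suc k" using hh by auto
      moreover have "rep_nash MP A1 A2 u1 u2 (T - length h) (cont s1 h) (cont s2 h)"
        using spe hh \<open>length h < T\<close> unfolding SPE_def by blast
      ultimately show ?thesis by simp
    qed
    have S1: "strat1 MP A1 A2 (Suc k) (cont s1 h)" using RN unfolding rep_nash_def by blast
    have S2: "strat2 MP A1 A2 (Suc k) (cont s2 h)" using RN unfolding rep_nash_def by blast
    have "avail1 MP A1 (cont s1 h [])" using S1 unfolding strat1_def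
      by (metis is_hist_Nil list.size(3) zero_less_Suc)
    then have mx: "mixed A1 (s1 h)" by (simp add: avail1_def cont_def)
    have "avail2 MP A2 (cont s2 h [])" using S2 unfolding strat2_def
      by (metis is_hist_Nil list.size(3) zero_less_Suc)
    then obtain b where b: "b \<in> A2" "s2 h = dl b" by (auto simp: avail2_def pure_strat_dl cont_def)
    define \<sigma> where "\<sigma> = s1 h"
    have IH: "rval A1 A2 u1 s1 s2 k (h @ [(x, b)]) = real k * v" if "x \<in> A1" for x
    proof -
      have "is_hist A1 A2 (h @ [(x, b)]) \<and> length (h @ [(x, b)]) + k = T" using hh that b by simp
      then show ?thesis using Suc.IH by blast
    qed
    define E where "E = (\<Sum>x\<in>A1. \<sigma> x * u1 x b)"
    have sig1: "(\<Sum>x\<in>A1. \<sigma> x) = 1" and sig0: "\<And>x. 0 \<le> \<sigma> x"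
      using mx unfolding mixed_def \<sigma>_def by auto
    have val: "rval A1 A2 u1 s1 s2 (Suc k) h = E + real k * v"
    proof -
      have "rval A1 A2 u1 s1 s2 (Suc k) h = (\<Sum>x\<in>A1. \<sigma> x * (u1 x b + rval A1 A2 u1 s1 s2 k (h @ [(x, b)])))"
        unfolding \<sigma>_def using fin b by (intro rval_mstep) auto
      also have "\<dots> = (\<Sum>x\<in>A1. \<sigma> x * u1 x b + \<sigma> x * (real k * v))"
        by (rule sum.cong) (auto simp: IH algebra_simps)
      also have "\<dots> = E + (\<Sum>x\<in>A1. \<sigma> x) * (real k * v)"
        by (simp add: E_def sum.distrib sum_distrib_right)
      finally show ?thesis using sig1 by (simp del: rval.simps)
    qed
    have dev: "u1 a b \<le> E" if a: "a \<in> A1" for a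
    proof -
      define s1' where "s1' = (cont s1 h)([] := dl a)"
      have st: "strat1 MP A1 A2 (Suc k) s1'"
        using S1 fin a mixed_dl[of A1 a] unfolding strat1_def s1'_def
        by (auto simp: avail1_def)
      have "rval A1 A2 u1 s1' (cont s2 h) (Suc k) [] = u1 a b + rval A1 A2 u1 s1' (cont s2 h) k ([] @ [(a, b)])"
        using fin a b by (intro rval_pstep) (auto simp: s1'_def cont_def)
      also have "rval A1 A2 u1 s1' (cont s2 h) k ([] @ [(a, b)]) = rval A1 A2 u1 (cont s1 h) (cont s2 h) k ([] @ [(a, b)])"
        by (rule rval_cong) (auto simp: s1'_def)
      also have "\<dots> = rval A1 A2 u1 s1 s2 k (h @ [(a, b)])" by (simp add: rval_cont)
      finally have "rval A1 A2 u1 s1' (cont s2 h) (Suc k) [] = u1 a b + real k * v" using IH a by simp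
      moreover have "rval A1 A2 u1 (cont s1 h) (cont s2 h) (Suc k) [] = E + real k * v"
        using val rval_cont[of A1 A2 u1 s1 h s2 "Suc k" "[]"] by (simp del: rval.simps)
      moreover have "rval A1 A2 u1 s1' (cont s2 h) (Suc k) [] \<le> rval A1 A2 u1 (cont s1 h) (cont s2 h) (Suc k) []"
        using RN st unfolding rep_nash_def by blast
      ultimately show ?thesis by simp
    qed
    have e2: "(\<Sum>x\<in>A1. \<sigma> x * E) = E"
      using sig1 sum_distrib_right[of \<sigma> A1 E] by simp
    have e1: "(\<Sum>x\<in>A1. \<sigma> x * (E - u1 x b)) = (\<Sum>x\<in>A1. \<sigma> x * E) - (\<Sum>x\<in>A1. \<sigma> x * u1 x b)"
      by (simp only: right_diff_distrib sum_subtractf)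
    have z: "(\<Sum>x\<in>A1. \<sigma> x * (E - u1 x b)) = 0"
      using e1 e2 unfolding E_def[symmetric] by simp
    have nn: "0 \<le> \<sigma> x * (E - u1 x b)" if "x \<in> A1" for x
      using dev[OF that] sig0[of x] by simp
    have all0: "\<forall>x\<in>A1. \<sigma> x * (E - u1 x b) = 0"
    proof -
      have "(\<Sum>x\<in>A1. \<sigma> x * (E - u1 x b)) = 0 \<longleftrightarrow> (\<forall>x\<in>A1. \<sigma> x * (E - u1 x b) = 0)"
        by (rule sum_nonneg_eq_0_iff[OF fin(1)]) (rule nn)
      then show ?thesis using z by blast
    qed
    have supp: "u1 x b = E" if "x \<in> A1" "0 < \<sigma> x" for x
    proof -
      have "\<sigma> x * (E - u1 x b) = 0" using all0 that(1) by blast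
      then show ?thesis using that(2) by simp
    qed
    have br: "\<forall>a'\<in>A1. u1 a' b \<le> u1 x b" if "x \<in> A1" "0 < \<sigma> x" for x
      using dev supp[OF that] by simp
    obtain x0 where x0: "x0 \<in> A1" "0 < \<sigma> x0"
    proof (rule ccontr)
      assume "\<not> thesis"
      then have "\<forall>x\<in>A1. \<sigma> x = 0" using sig0 that by (metis order.not_eq_order_implies_strict)
      then show False using sig1 by simp
    qed
    have Ev: "E = v" using supp[OF x0] v1[OF x0(1) b(1) br[OF x0]] by simp
    show "rval A1 A2 u1 s1 s2 (Suc k) h = real (Suc k) * v \<and> (0 < Suc k \<longrightarrow> stage_nash MP A1 A2 u1 u2 (s1 h) (s2 h))"
    proof (intro conjI impI)
      show "rval A1 A2 u1 s1 s2 (Suc k) h = real (Suc k) * v" using val Ev by (simp del: rval.simps add: algebra_simps)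
      show "stage_nash MP A1 A2 u1 u2 (s1 h) (s2 h)"
        unfolding stage_nash_def
      proof (intro conjI allI impI)
        show "avail1 MP A1 (s1 h)" using mx by (simp add: avail1_def)
        show "avail2 MP A2 (s2 h)" using b by (auto simp: avail2_def pure_strat_dl)
      next
        fix \<sigma>' assume "avail1 MP A1 \<sigma>'"
        then have m': "mixed A1 \<sigma>'" by (simp add: avail1_def)
        have "EU A1 A2 u1 \<sigma>' (s2 h) = (\<Sum>x\<in>A1. \<sigma>' x * u1 x b)" using b fin by (simp add: EU_dl2)
        also have "\<dots> \<le> (\<Sum>x\<in>A1. \<sigma>' x * E)"
          using m' dev by (intro sum_mono mult_left_mono) (auto simp: mixed_def)
        also have "\<dots> = (\<Sum>x\<in>A1. \<sigma>' x) * E" by (rule sum_distrib_right[symmetric])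
        also have "\<dots> = E" using m' by (simp add: mixed_def)
        also have "E = EU A1 A2 u1 (s1 h) (s2 h)" using b fin by (simp add: EU_dl2 E_def \<sigma>_def)
        finally show "EU A1 A2 u1 \<sigma>' (s2 h) \<le> EU A1 A2 u1 (s1 h) (s2 h)" .
      next
        fix \<tau>' assume "avail2 MP A2 \<tau>'"
        then obtain b' where b': "b' \<in> A2" "\<tau>' = dl b'" by (auto simp: avail2_def pure_strat_dl)
        have "EU A1 A2 u2 (s1 h) \<tau>' = (\<Sum>x\<in>A1. \<sigma> x * u2 x b')" using b' fin by (simp add: EU_dl2 \<sigma>_def)
        also have "\<dots> \<le> (\<Sum>x\<in>A1. \<sigma> x * u2 x b)"
        proof (rule sum_mono)
          fix x assume x: "x \<in> A1"
          show "\<sigma> x * u2 x b' \<le> \<sigma> x * u2 x b"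
          proof (cases "\<sigma> x = 0")
            case True then show ?thesis by simp
          next
            case False
            then have "0 < \<sigma> x" using sig0[of x] by simp
            then have "u2 x b' \<le> u2 x b" using cond[OF x b(1) br[OF x] b'(1)] by simp
            then show ?thesis using sig0[of x] by (rule mult_left_mono)
          qed
        qed
        also have "\<dots> = EU A1 A2 u2 (s1 h) (s2 h)" using b fin by (simp add: EU_dl2 \<sigma>_def)
        finally show "EU A1 A2 u2 (s1 h) \<tau>' \<le> EU A1 A2 u2 (s1 h) (s2 h)" .
      qed
    qed
  qed
qed


lemma stage_nash_PP_pure:
  "stage_nash PP A B u1 u2 \<sigma> \<tau> \<Longrightarrow> \<exists>a b. \<sigma> = dl a \<and> \<tau> = dl b"
  by (auto simp: stage_nash_def avail1_def avail2_def pure_strat_dl)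

theorem mainTheorem9:
  fixes A1 :: "'a set" and A2 :: "'b set" and u1 u2 :: "'a \<Rightarrow> 'b \<Rightarrow> real"
  assumes "finite A1" "A1 \<noteq> {}" "finite A2" "A2 \<noteq> {}"
    and "card (V1 PP A1 A2 u1 u2) = 1"
    and "card (V2 PP A1 A2 u1 u2) > 1"
    and "\<not> in_GLS PP A1 A2 u1 u2"
  shows "\<not> in_GLS MP A1 A2 u1 u2"
proof
  assume MP: "in_GLS MP A1 A2 u1 u2"
  have fin: "finite A1" "finite A2" using assms by auto
  obtain v where V1: "V1 PP A1 A2 u1 u2 = {v}" using assms(5) card_1_singletonE by blast
  have finV2: "finite (V2 PP A1 A2 u1 u2)" by (rule card_ge_0_finite) (use assms(6) in linarith)
  obtain x y where xy: "x \<in> V2 PP A1 A2 u1 u2" "y \<in> V2 PP A1 A2 u1 u2" "x \<noteq> y"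
    using assms(6) card_le_Suc0_iff_eq[OF finV2] by (metis One_nat_def not_le)
  have pureNE: "\<exists>a b. stage_nash PP A1 A2 u1 u2 (dl a) (dl b) \<and> z = u2 a b"
    if zV: "z \<in> V2 PP A1 A2 u1 u2" for z
  proof -
    obtain \<sigma> \<tau> where st: "stage_nash PP A1 A2 u1 u2 \<sigma> \<tau>" "z = EU A1 A2 u2 \<sigma> \<tau>"
      using zV unfolding V2_def by blast
    then obtain a b where ab: "\<sigma> = dl a" "\<tau> = dl b" using stage_nash_PP_pure by blast
    then have "a \<in> A1" "b \<in> A2" using st(1) stage_nash_PP_dl[OF fin] by blast+
    then show ?thesis using st ab fin by (auto simp: EU_dl)
  qed
  obtain aH bH aL bL where NH: "stage_nash PP A1 A2 u1 u2 (dl aH) (dl bH)"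
    and NL: "stage_nash PP A1 A2 u1 u2 (dl aL) (dl bL)" and HL: "u2 aL bL < u2 aH bH"
  proof -
    obtain a1 b1 where p1: "stage_nash PP A1 A2 u1 u2 (dl a1) (dl b1)" "x = u2 a1 b1"
      using pureNE[OF xy(1)] by blast
    obtain a2 b2 where p2: "stage_nash PP A1 A2 u1 u2 (dl a2) (dl b2)" "y = u2 a2 b2"
      using pureNE[OF xy(2)] by blast
    show ?thesis
    proof (cases "x < y")
      case True
      then show ?thesis using that[OF p2(1) p1(1)] p1 p2 by simp
    next
      case False
      then have "y < x" using xy(3) by simp
      then show ?thesis using that[OF p1(1) p2(1)] p1 p2 by simp
    qed
  qed
  have cond: "u2 a b' \<le> u2 a b"
    if "a \<in> A1" "b \<in> A2" "\<forall>a'\<in>A1. u1 a' b \<le> u1 a b" "b' \<in> A2" for a b b'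
  proof (rule ccontr)
    assume "\<not> u2 a b' \<le> u2 a b"
    then have "u2 a b < u2 a b'" by simp
    then have "in_GLS PP A1 A2 u1 u2"
      using pp_cond[OF fin NH NL HL that(1,2,3) that(4)] by blast
    then show False using assms(7) by blast
  qed
  have v1: "u1 a b = v" if "a \<in> A1" "b \<in> A2" "\<forall>a'\<in>A1. u1 a' b \<le> u1 a b" for a b
  proof -
    have "stage_nash PP A1 A2 u1 u2 (dl a) (dl b)"
      using stage_nash_PP_dl[OF fin] that cond[OF that] by blast
    then have "EU A1 A2 u1 (dl a) (dl b) \<in> V1 PP A1 A2 u1 u2" unfolding V1_def by blast
    then show ?thesis using V1 fin that by (simp add: EU_dl)
  qed
  obtain T s1 s2 h where spe: "SPE MP A1 A2 u1 u2 T s1 s2" and hh: "is_hist A1 A2 h" "length h < T"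
    and ns: "\<not> stage_nash MP A1 A2 u1 u2 (s1 h) (s2 h)"
    using MP unfolding in_GLS_def by blast
  define m where "m = T - length h"
  have P: "\<forall>h. is_hist A1 A2 h \<and> length h + m = T \<longrightarrow>
     rval A1 A2 u1 s1 s2 m h = real m * v \<and> (0 < m \<longrightarrow> stage_nash MP A1 A2 u1 u2 (s1 h) (s2 h))"
    by (rule mp_part[OF fin cond v1 spe])
  have "length h + m = T" "0 < m" using hh by (auto simp: m_def)
  then show False using P hh ns by blast
qed

end
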